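(* Let $1\le r\le d$ and let $\mathcal{M}\subset\mathbb{R}^d$ be an $r$-dimensional linear subspace. Let $\mathcal{D}$ be a nonempty subset of $\mathcal{M}$ (the data set, contained in a ground-truth set $\mathcal{M}^\ast\subset\mathcal{M}$). Let $\hat{\mathbf n}\sim\mathcal{N}(\mathbf 0,\tfrac1d\mathbf I_d)$ be a random vector and let $F$ be the (random) linear classifier $F(\mathbf x)=1$ if $\hat{\mathbf n}^T\mathbf x\ge 0$ and $F(\mathbf x)=2$ otherwise. Define the Euclidean margin $$d_e(F)=\inf_{\mathbf x\in\mathcal{D}}\ \inf\{\|\boldsymbol\delta\|_2:\ \boldsymbol\delta\in\mathbb{R}^d,\ F(\mathbf x)\neq F(\mathbf x+\boldsymbol\delta)\}$$ and the manifold margin $$d_{\mathcal M}(F)=\tfrac12\inf\{\mathcal R_{\mathcal M}(\mathbf x_1,\mathbf x_2):\ \mathbf x_1,\mathbf x_2\in\mathcal D,\ F(\mathbf x_1)\ne F(\mathbf x_2)\},$$ where $\mathcal R_{\mathcal M}$ is the geodesic distance on $\mathcal M$ (the infimum of lengths of continuously differentiable curves $\gamma:[0,1]\to\mathcal M$ joining the two points, with the inner product induced from $\mathbb{R}^d$). With the conventions $\inf\emptyset=+\infty$ and $d_e(F)/d_{\mathcal M}(F)=0$ when $d_{\mathcal M}(F)=+\infty$, and assuming $d_{\mathcal M}(F)>0$ almost surely, we have $$\mathbb{E}\left[\frac{d_e(F)}{d_{\mathcal M}(F)}\right]\le\sqrt{\frac rd}.$$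
   Context: $\mathbf I_d$ is the $d\times d$ identity matrix and $\|\cdot\|_2$ the Euclidean norm. The expectation is over the random normal vector $\hat{\mathbf n}$ of the decision hyperplane $\{\mathbf x:\hat{\mathbf n}^T\mathbf x=0\}$. *)

theory Defs
  imports "HOL-Analysis.Analysis" "HOL-Probability.Probability"
begin

definition gauss_vec :: "(real^'n) measure" where
  "gauss_vec = density lborel
     (\<lambda>v. \<Prod>i\<in>UNIV. ennreal (normal_density 0 (1 / sqrt (real CARD('n))) (v $ i)))"

definition lin_clf :: "real^'n \<Rightarrow> real^'n \<Rightarrow> nat" where
  "lin_clf nv x = (if nv \<bullet> x \<ge> 0 then 1 else 2)"

definition geodesic_dist :: "(real^'n) set \<Rightarrow> real^'n \<Rightarrow> real^'n \<Rightarrow> ereal" where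
  "geodesic_dist M x y = Inf ((\<lambda>\<gamma>. ereal (integral {0..1} (\<lambda>t. norm (vector_derivative \<gamma> (at t)))))
      ` {\<gamma>. \<gamma> C1_differentiable_on {0..1} \<and> \<gamma> ` {0..1} \<subseteq> M \<and> \<gamma> 0 = x \<and> \<gamma> 1 = y})"

definition eucl_margin :: "(real^'n \<Rightarrow> nat) \<Rightarrow> (real^'n) set \<Rightarrow> ereal" where
  "eucl_margin F D = (INF x\<in>D. INF \<delta>\<in>{\<delta>. F x \<noteq> F (x + \<delta>)}. ereal (norm \<delta>))"

definition manifold_margin :: "(real^'n) set \<Rightarrow> (real^'n \<Rightarrow> nat) \<Rightarrow> (real^'n) set \<Rightarrow> ereal" where
  "manifold_margin M F D = ereal (1/2) *
      Inf {geodesic_dist M x1 x2 | x1 x2. x1 \<in> D \<and> x2 \<in> D \<and> F x1 \<noteq> F x2}"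

definition margin_ratio :: "(real^'n) set \<Rightarrow> (real^'n \<Rightarrow> nat) \<Rightarrow> (real^'n) set \<Rightarrow> real" where
  "margin_ratio M F D = (if manifold_margin M F D = \<infinity> then 0
      else real_of_ereal (eucl_margin F D) / real_of_ereal (manifold_margin M F D))"

end

theory Submission imports Defs begin

lemma Basis_cart_range: "(Basis :: (real^'n) set) = range (\<lambda>i. axis i 1)"
  by (auto simp: Basis_vec_def)

lemma prod_Basis_cart:
  fixes g :: "real^'n \<Rightarrow> 'b::comm_monoid_mult"
  shows "(\<Prod>b\<in>Basis. g b) = (\<Prod>i\<in>UNIV. g (axis i 1))"
  unfolding Basis_cart_range
  by (subst prod.reindex) (auto simp: inj_on_def axis_eq_axis)

lemma gauss_vec_density:
  "gauss_vec = density lborel (\<lambda>v::real^'n. ennreal (\<Prod>i\<in>UNIV. normal_density 0 (1 / sqrt (real CARD('n))) (v $ i)))"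
  unfolding gauss_vec_def by (simp add: prod_ennreal)

lemma gauss_vec_UNIV: "emeasure (gauss_vec :: (real^'n) measure) UNIV = 1"
proof -
  let ?s = "1 / sqrt (real CARD('n))"
  have "emeasure (gauss_vec :: (real^'n) measure) UNIV =
     (\<integral>\<^sup>+v. (\<Prod>b\<in>(Basis::(real^'n) set). ennreal (normal_density 0 ?s (v \<bullet> b))) \<partial>lborel)"
    unfolding gauss_vec_def
    by (simp add: emeasure_density prod_Basis_cart inner_axis)
  also have "\<dots> = (\<Prod>b\<in>(Basis::(real^'n) set). (\<integral>\<^sup>+x. ennreal (normal_density 0 ?s x) \<partial>lborel))"
    by (rule nn_integral_lborel_prod) auto
  also have "\<dots> = 1"
    by (simp add: nn_integral_eq_integral)
  finally show ?thesis .
qed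


definition symT :: "('n \<Rightarrow> 'n) \<Rightarrow> ('n \<Rightarrow> real) \<Rightarrow> real^'n \<Rightarrow> real^'n" where
  "symT p s v = (\<chi> k. s k * v $ p k)"

lemma linear_symT: "linear (symT p s)"
  by (rule linearI) (auto simp: symT_def vec_eq_iff algebra_simps)

lemma symT_measurable[measurable]: "symT p s \<in> borel_measurable borel"
  by (intro borel_measurable_continuous_onI linear_continuous_on linear_conv_bounded_linear[THEN iffD1] linear_symT)

lemma box_cart_iff: "(x::real^'n) \<in> box l u \<longleftrightarrow> (\<forall>i. l $ i < x $ i \<and> x $ i < u $ i)"
  by (simp add: mem_box_cart)

lemma distr_symT:
  fixes p :: "'n::finite \<Rightarrow> 'n" and s :: "'n \<Rightarrow> real"
  assumes p: "bij p" and s: "\<And>k. s k = 1 \<or> s k = -1"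
  shows "distr lborel borel (symT p s) = (lborel :: (real^'n) measure)"
proof (rule lborel_eqI[symmetric])
  fix l u :: "real^'n"
  assume le: "\<And>b. b \<in> Basis \<Longrightarrow> l \<bullet> b \<le> u \<bullet> b"
  have leq: "l $ i \<le> u $ i" for i using le[of "axis i 1"] by (auto simp: Basis_cart_range inner_axis)
  define q where "q = inv p"
  have pq: "p (q m) = m" for m using p by (simp add: q_def surj_f_inv_f bij_is_surj)
  have qp: "q (p k) = k" for k using p by (simp add: q_def inv_f_f bij_is_inj)
  have qbij: "bij q" using p by (simp add: q_def bij_imp_bij_inv)
  define l' where "l' = (\<chi> m. if s (q m) = 1 then l $ q m else - u $ q m)"
  define u' where "u' = (\<chi> m. if s (q m) = 1 then u $ q m else - l $ q m)"
  have pre: "symT p s -` box l u = box l' u'"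
  proof (intro set_eqI iffI)
    fix v assume "v \<in> symT p s -` box l u"
    then have h: "l $ k < s k * v $ p k \<and> s k * v $ p k < u $ k" for k
      by (auto simp: box_cart_iff symT_def)
    show "v \<in> box l' u'" unfolding box_cart_iff
    proof
      fix m
      show "l' $ m < v $ m \<and> v $ m < u' $ m"
        using h[of "q m"] s[of "q m"] by (auto simp: l'_def u'_def pq)
    qed
  next
    fix v assume "v \<in> box l' u'"
    then have h: "l' $ m < v $ m \<and> v $ m < u' $ m" for m
      by (auto simp: box_cart_iff)
    show "v \<in> symT p s -` box l u" unfolding box_cart_iff vimage_eq
    proof
      fix k
      show "l $ k < symT p s v $ k \<and> symT p s v $ k < u $ k"
        using h[of "p k"] s[of k] by (auto simp: l'_def u'_def qp symT_def)
    qed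
  qed
  have le': "\<And>b. b \<in> Basis \<Longrightarrow> l' \<bullet> b \<le> u' \<bullet> b"
    using leq by (auto simp: Basis_cart_range inner_axis l'_def u'_def)
  have "(\<Prod>b\<in>Basis. (u' - l') \<bullet> b) = (\<Prod>m\<in>UNIV. (u - l) $ q m)"
    by (subst prod_Basis_cart) (auto simp: inner_axis l'_def u'_def intro!: prod.cong)
  also have "\<dots> = (\<Prod>k\<in>UNIV. (u - l) $ k)"
    using prod.reindex_bij_betw[of q UNIV UNIV "\<lambda>k. (u - l) $ k"] qbij by (simp add: bij_betw_def)
  also have "\<dots> = (\<Prod>b\<in>Basis. (u - l) \<bullet> b)"
    by (subst prod_Basis_cart) (simp add: inner_axis)
  finally have prodeq: "(\<Prod>b\<in>Basis. (u' - l') \<bullet> b) = (\<Prod>b\<in>Basis. (u - l) \<bullet> b)" .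
  show "emeasure (distr lborel borel (symT p s)) (box l u) = (\<Prod>b\<in>Basis. (u - l) \<bullet> b)"
    by (simp add: emeasure_distr pre le' prodeq)
qed simp


definition gdens :: "real^'n \<Rightarrow> ennreal" where
  "gdens v = (\<Prod>i\<in>UNIV. ennreal (normal_density 0 (1 / sqrt (real CARD('n))) (v $ i)))"

lemma gdens_measurable[measurable]: "gdens \<in> borel_measurable borel"
  unfolding gdens_def by measurable

lemma gdens_symT:
  fixes p :: "'n::finite \<Rightarrow> 'n" and v :: "real^'n"
  assumes p: "bij p" and s: "\<And>k. s k = 1 \<or> s k = -1"
  shows "gdens (symT p s v) = gdens v"
proof -
  let ?nd = "normal_density 0 (1 / sqrt (real CARD('n)))"
  have nd: "?nd (s k * x) = ?nd x" for k x
    using s[of k] by (auto simp: normal_density_def)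
  have "gdens (symT p s v) = (\<Prod>k\<in>UNIV. ennreal (?nd (v $ p k)))"
    unfolding gdens_def symT_def by (simp add: nd)
  also have "\<dots> = gdens v"
    unfolding gdens_def
    using prod.reindex_bij_betw[of p UNIV UNIV "\<lambda>m. ennreal (?nd (v $ m))"] p
    by (simp add: bij_betw_def)
  finally show ?thesis .
qed

lemma distr_gauss_symT:
  assumes p: "bij p" and s: "\<And>k. s k = 1 \<or> s k = -1"
  shows "distr gauss_vec borel (symT p s) = (gauss_vec :: (real^'n) measure)"
proof (rule measure_eqI)
  show "sets (distr gauss_vec borel (symT p s)) = sets (gauss_vec :: (real^'n) measure)"
    by (simp add: gauss_vec_def)
  fix A :: "(real^'n) set" assume "A \<in> sets (distr gauss_vec borel (symT p s))"
  then have A[measurable]: "A \<in> sets borel" by simp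
  have G: "gauss_vec = density lborel gdens" unfolding gauss_vec_def gdens_def ..
  have "emeasure (distr gauss_vec borel (symT p s)) A = emeasure gauss_vec (symT p s -` A)"
    using measurable_sets[OF symT_measurable A, of p s] by (simp add: emeasure_distr G)
  also have "\<dots> = (\<integral>\<^sup>+v. gdens v * indicator (symT p s -` A) v \<partial>lborel)"
    unfolding G using measurable_sets[OF symT_measurable A, of p s]
    by (subst emeasure_density) (auto simp: mult.commute)
  also have "\<dots> = (\<integral>\<^sup>+v. (\<lambda>w. gdens w * indicator A w) (symT p s v) \<partial>lborel)"
    by (simp add: gdens_symT[OF p s] indicator_def)
  also have "\<dots> = (\<integral>\<^sup>+w. gdens w * indicator A w \<partial>distr lborel borel (symT p s))"
    by (subst nn_integral_distr) auto
  also have "\<dots> = (\<integral>\<^sup>+w. gdens w * indicator A w \<partial>lborel)"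
    by (simp add: distr_symT[OF p s])
  also have "\<dots> = emeasure gauss_vec A"
    unfolding G by (subst emeasure_density) (auto simp: mult.commute)
  finally show "emeasure (distr gauss_vec borel (symT p s)) A = emeasure gauss_vec A" .
qed

lemma integral_gauss_symT:
  fixes g :: "real^'n \<Rightarrow> real"
  assumes p: "bij p" and s: "\<And>k. s k = 1 \<or> s k = -1" and g[measurable]: "g \<in> borel_measurable borel"
  shows "(\<integral>v. g (symT p s v) \<partial>gauss_vec) = (\<integral>v. g v \<partial>gauss_vec)"
proof -
  have "(\<integral>v. g v \<partial>gauss_vec) = (\<integral>v. g v \<partial>distr gauss_vec borel (symT p s))"
    by (simp add: distr_gauss_symT[OF p s])
  also have "\<dots> = (\<integral>v. g (symT p s v) \<partial>gauss_vec)"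
    by (subst integral_distr) (auto simp: gauss_vec_def)
  finally show ?thesis by simp
qed


lemma prob_gauss: "prob_space (gauss_vec :: (real^'n) measure)"
  by (rule prob_spaceI) (simp add: gauss_vec_UNIV[unfolded gauss_vec_def] gauss_vec_def)

definition phi :: "'n \<Rightarrow> 'n \<Rightarrow> real^'n \<Rightarrow> real" where
  "phi i j v = v $ i * v $ j / (v \<bullet> v)"

lemma phi_measurable[measurable]: "phi i j \<in> borel_measurable borel"
  unfolding phi_def by measurable

lemma phi_bound: "\<bar>phi i j v\<bar> \<le> 1"
proof -
  have a: "\<bar>v $ i\<bar> \<le> norm v" "\<bar>v $ j\<bar> \<le> norm v" by (simp_all add: component_le_norm_cart)
  have "\<bar>v $ i * v $ j\<bar> \<le> norm v * norm v"
    using a by (simp add: abs_mult mult_mono')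
  also have "\<dots> = v \<bullet> v" by (simp add: power2_norm_eq_inner[symmetric] power2_eq_square)
  finally have "\<bar>v $ i * v $ j\<bar> \<le> v \<bullet> v" .
  moreover have "0 \<le> v \<bullet> v" by simp
  ultimately have "\<bar>v $ i * v $ j\<bar> / \<bar>v \<bullet> v\<bar> \<le> 1"
    by (cases "v \<bullet> v = 0") simp_all
  then show ?thesis unfolding phi_def abs_divide .
qed

lemma phi_integrable: "integrable (gauss_vec :: (real^'n) measure) (phi i j)"
proof -
  interpret prob_space "gauss_vec :: (real^'n) measure" by (rule prob_gauss)
  show ?thesis
    by (rule integrable_const_bound[where B=1]) (auto simp: phi_bound gauss_vec_def)
qed

lemma inner_symT:
  fixes p :: "'n::finite \<Rightarrow> 'n"
  assumes p: "bij p" and s: "\<And>k. s k = 1 \<or> s k = -1"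
  shows "symT p s v \<bullet> symT p s v = v \<bullet> v"
proof -
  have ss: "s k * s k = 1" for k using s[of k] by auto
  have "symT p s v \<bullet> symT p s v = (\<Sum>k\<in>UNIV. (s k * s k) * (v $ p k * v $ p k))"
    by (simp add: inner_vec_def symT_def algebra_simps)
  also have "\<dots> = (\<Sum>k\<in>UNIV. v $ p k * v $ p k)" by (simp add: ss)
  also have "\<dots> = (\<Sum>m\<in>UNIV. v $ m * v $ m)"
    using sum.reindex_bij_betw[of p UNIV UNIV "\<lambda>m. v $ m * v $ m"] p
    by (simp add: bij_betw_def)
  also have "\<dots> = v \<bullet> v" by (simp add: inner_vec_def)
  finally show ?thesis .
qed

lemma integral_phi_off:
  fixes i j :: "'n::finite"
  assumes "i \<noteq> j"
  shows "(\<integral>v. phi i j v \<partial>(gauss_vec :: (real^'n) measure)) = 0"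
proof -
  define s where "s = (\<lambda>k::'n. if k = i then -1 else (1::real))"
  have s: "\<And>k. s k = 1 \<or> s k = -1" by (auto simp: s_def)
  have "(\<integral>v. phi i j v \<partial>(gauss_vec :: (real^'n) measure)) = (\<integral>v. phi i j (symT id s v) \<partial>gauss_vec)"
    by (rule integral_gauss_symT[symmetric]) (auto simp: s)
  also have "\<dots> = (\<integral>v. - phi i j v \<partial>gauss_vec)"
  proof (intro Bochner_Integration.integral_cong refl)
    fix v :: "real^'n"
    show "phi i j (symT id s v) = - phi i j v"
      unfolding phi_def inner_symT[OF bij_id s] using assms by (simp add: symT_def s_def)
  qed
  finally show ?thesis by simp
qed

definition tr :: "'n \<Rightarrow> 'n \<Rightarrow> 'n \<Rightarrow> 'n" where
  "tr i j k = (if k = i then j else if k = j then i else k)"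

lemma bij_tr: "bij (tr i j)"
  by (rule o_bij[where g="tr i j"]) (auto simp: tr_def fun_eq_iff)

lemma integral_phi_diag:
  fixes i j :: "'n::finite"
  shows "(\<integral>v. phi i i v \<partial>(gauss_vec :: (real^'n) measure)) = (\<integral>v. phi j j v \<partial>gauss_vec)"
proof -
  have s: "\<And>k. (\<lambda>_. 1::real) k = 1 \<or> (\<lambda>_. 1::real) k = -1" by auto
  have "(\<integral>v. phi j j v \<partial>(gauss_vec :: (real^'n) measure)) = (\<integral>v. phi j j (symT (tr i j) (\<lambda>_. 1) v) \<partial>gauss_vec)"
    by (rule integral_gauss_symT[symmetric]) (auto simp: bij_tr)
  also have "\<dots> = (\<integral>v. phi i i v \<partial>gauss_vec)"
  proof (intro Bochner_Integration.integral_cong refl)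
    fix v :: "real^'n"
    show "phi j j (symT (tr i j) (\<lambda>_. 1) v) = phi i i v"
      unfolding phi_def inner_symT[OF bij_tr s] by (simp add: symT_def tr_def)
  qed
  finally show ?thesis by simp
qed

lemma integral_phi_diag_le:
  fixes i :: "'n::finite"
  shows "(\<integral>v. phi i i v \<partial>(gauss_vec :: (real^'n) measure)) \<le> 1 / real CARD('n)"
proof -
  interpret prob_space "gauss_vec :: (real^'n) measure" by (rule prob_gauss)
  have "real CARD('n) * (\<integral>v. phi i i v \<partial>(gauss_vec :: (real^'n) measure))
      = (\<Sum>k\<in>UNIV. (\<integral>v. phi k k v \<partial>(gauss_vec :: (real^'n) measure)))"
  proof -
    have "(\<Sum>k\<in>UNIV. (\<integral>v. phi k k v \<partial>(gauss_vec :: (real^'n) measure)))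
        = (\<Sum>k\<in>(UNIV::'n set). (\<integral>v. phi i i v \<partial>(gauss_vec :: (real^'n) measure)))"
      by (rule sum.cong[OF refl]) (rule integral_phi_diag)
    then show ?thesis by simp
  qed
  also have "\<dots> = (\<integral>v. (\<Sum>k\<in>UNIV. phi k k v) \<partial>(gauss_vec :: (real^'n) measure))"
    by (subst Bochner_Integration.integral_sum) (auto simp: phi_integrable)
  also have "\<dots> \<le> (\<integral>v. 1 \<partial>(gauss_vec :: (real^'n) measure))"
  proof (rule integral_mono)
    show "integrable gauss_vec (\<lambda>v. \<Sum>k\<in>UNIV. phi k k v)" by (auto intro: phi_integrable)
    show "integrable (gauss_vec :: (real^'n) measure) (\<lambda>v. 1)" by simp
    fix v :: "real^'n"
    have "(\<Sum>k\<in>UNIV. phi k k v) = (\<Sum>k\<in>UNIV. v $ k * v $ k) / (v \<bullet> v)"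
      unfolding phi_def by (simp add: sum_divide_distrib)
    also have "\<dots> = (v \<bullet> v) / (v \<bullet> v)" by (simp add: inner_vec_def)
    also have "\<dots> \<le> 1" by (cases "v \<bullet> v = 0") simp_all
    finally show "(\<Sum>k\<in>UNIV. phi k k v) \<le> 1" .
  qed
  also have "\<dots> = 1" by (simp add: prob_space)
  finally show ?thesis by (simp add: field_simps mult.commute)
qed


lemma sq_expand:
  fixes b v :: "real^'n"
  shows "(b \<bullet> v)\<^sup>2 / (v \<bullet> v) = (\<Sum>i\<in>UNIV. \<Sum>j\<in>UNIV. b $ i * b $ j * phi i j v)"
proof -
  have "(b \<bullet> v)\<^sup>2 = (\<Sum>i\<in>UNIV. \<Sum>j\<in>UNIV. (b $ i * v $ i) * (b $ j * v $ j))"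
    by (simp add: inner_vec_def power2_eq_square sum_product)
  then show ?thesis
    by (simp add: phi_def sum_divide_distrib algebra_simps)
qed

lemma integrable_sq: "integrable (gauss_vec :: (real^'n) measure) (\<lambda>v. (b \<bullet> v)\<^sup>2 / (v \<bullet> v))"
  unfolding sq_expand by (auto intro!: Bochner_Integration.integrable_sum phi_integrable)

lemma integral_sq_le:
  fixes b :: "real^'n"
  assumes "norm b = 1"
  shows "(\<integral>v. (b \<bullet> v)\<^sup>2 / (v \<bullet> v) \<partial>(gauss_vec :: (real^'n) measure)) \<le> 1 / real CARD('n)"
proof -
  have "(\<integral>v. (b \<bullet> v)\<^sup>2 / (v \<bullet> v) \<partial>(gauss_vec :: (real^'n) measure))
      = (\<Sum>i\<in>UNIV. \<Sum>j\<in>UNIV. b $ i * b $ j * (\<integral>v. phi i j v \<partial>(gauss_vec :: (real^'n) measure)))"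
    unfolding sq_expand
    by (simp add: Bochner_Integration.integral_sum phi_integrable Bochner_Integration.integrable_sum)
  also have "\<dots> = (\<Sum>i\<in>UNIV. b $ i * b $ i * (\<integral>v. phi i i v \<partial>(gauss_vec :: (real^'n) measure)))"
  proof (rule sum.cong[OF refl])
    fix i
    show "(\<Sum>j\<in>UNIV. b $ i * b $ j * (\<integral>v. phi i j v \<partial>(gauss_vec :: (real^'n) measure))) =
        b $ i * b $ i * (\<integral>v. phi i i v \<partial>(gauss_vec :: (real^'n) measure))"
      by (subst sum.remove[of _ i]) (auto simp: integral_phi_off intro!: sum.neutral)
  qed
  also have "\<dots> \<le> (\<Sum>i\<in>UNIV. b $ i * b $ i * (1 / real CARD('n)))"
    by (intro sum_mono mult_left_mono integral_phi_diag_le) auto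
  also have "\<dots> = (b \<bullet> b) / real CARD('n)"
    by (simp add: inner_vec_def sum_divide_distrib)
  also have "\<dots> = 1 / real CARD('n)"
    using assms by (simp add: power2_norm_eq_inner[symmetric])
  finally show ?thesis .
qed

lemma main_prob:
  fixes B :: "(real^'n) set"
  assumes fin: "finite B" and unit: "\<And>b. b \<in> B \<Longrightarrow> norm b = 1" and cardB: "card B = r" and r: "1 \<le> r"
  shows "(\<integral>\<^sup>+v. ennreal (sqrt (\<Sum>b\<in>B. (b \<bullet> v)\<^sup>2 / (v \<bullet> v))) \<partial>(gauss_vec :: (real^'n) measure))
          \<le> ennreal (sqrt (real r / real CARD('n)))"
proof -
  interpret prob_space "gauss_vec :: (real^'n) measure" by (rule prob_gauss)
  define a where "a = sqrt (real r / real CARD('n))"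
  have a: "a > 0" using r by (simp add: a_def)
  define Q where "Q v = (\<Sum>b\<in>B. (b \<bullet> v)\<^sup>2 / (v \<bullet> v))" for v :: "real^'n"
  have Qnn: "Q v \<ge> 0" for v unfolding Q_def by (intro sum_nonneg) simp
  have intQ: "integrable gauss_vec Q"
    unfolding Q_def by (auto intro!: Bochner_Integration.integrable_sum integrable_sq)
  have EQ: "(\<integral>v. Q v \<partial>gauss_vec) \<le> real r / real CARD('n)"
  proof -
    have "(\<integral>v. Q v \<partial>gauss_vec) = (\<Sum>b\<in>B. (\<integral>v. (b \<bullet> v)\<^sup>2 / (v \<bullet> v) \<partial>gauss_vec))"
      unfolding Q_def by (simp add: Bochner_Integration.integral_sum integrable_sq)
    also have "\<dots> \<le> (\<Sum>b\<in>B. 1 / real CARD('n))"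
      by (intro sum_mono integral_sq_le unit)
    also have "\<dots> = real r / real CARD('n)" using cardB by simp
    finally show ?thesis .
  qed
  have pt: "sqrt (Q v) \<le> a / 2 + Q v / (2 * a)" for v
  proof -
    have "0 \<le> (sqrt (Q v) - a)\<^sup>2" by simp
    also have "\<dots> = Q v - 2 * a * sqrt (Q v) + a\<^sup>2"
      using Qnn[of v] by (simp add: power2_diff)
    finally have "2 * a * sqrt (Q v) \<le> Q v + a\<^sup>2" by simp
    then show ?thesis using a by (simp add: field_simps power2_eq_square)
  qed
  have "(\<integral>\<^sup>+v. ennreal (sqrt (Q v)) \<partial>gauss_vec) \<le> (\<integral>\<^sup>+v. ennreal (a / 2 + Q v / (2 * a)) \<partial>gauss_vec)"
    by (intro nn_integral_mono ennreal_leI pt)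
  also have "\<dots> = ennreal (\<integral>v. a / 2 + Q v / (2 * a) \<partial>gauss_vec)"
    using a Qnn by (intro nn_integral_eq_integral) (auto intro!: Bochner_Integration.integrable_add intQ)
  also have "\<dots> \<le> ennreal a"
  proof (rule ennreal_leI)
    have "(\<integral>v. a / 2 + Q v / (2 * a) \<partial>gauss_vec) = a / 2 + (\<integral>v. Q v \<partial>gauss_vec) / (2 * a)"
      using intQ by (simp add: prob_space)
    also have "\<dots> \<le> a / 2 + (a * a) / (2 * a)"
      using EQ a by (intro add_left_mono divide_right_mono) (auto simp: a_def)
    also have "\<dots> = a" using a by simp
    finally show "(\<integral>v. a / 2 + Q v / (2 * a) \<partial>gauss_vec) \<le> a" .
  qed
  finally show ?thesis unfolding Q_def a_def .
qed


lemma C1_chord_le: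
  fixes \<gamma> :: "real \<Rightarrow> real^'n"
  assumes "\<gamma> C1_differentiable_on {0..1}"
  shows "norm (\<gamma> 1 - \<gamma> 0) \<le> integral {0..1} (\<lambda>t. norm (vector_derivative \<gamma> (at t)))"
proof -
  obtain D where D: "\<And>x. x \<in> {0..1} \<Longrightarrow> (\<gamma> has_vector_derivative D x) (at x)"
    and cD: "continuous_on {0..1} D"
    using assms unfolding C1_differentiable_on_def by blast
  have vd: "vector_derivative \<gamma> (at t) = D t" if "t \<in> {0..1}" for t
    using D[OF that] by (rule vector_derivative_at)
  have "(D has_integral (\<gamma> 1 - \<gamma> 0)) {0..1}"
    by (rule fundamental_theorem_of_calculus) (use D in \<open>auto intro: has_vector_derivative_at_within\<close>)
  then have i: "integral {0..1} D = \<gamma> 1 - \<gamma> 0" and iD: "D integrable_on {0..1}"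
    by (auto simp: integral_unique has_integral_integrable)
  have inD: "(\<lambda>t. norm (D t)) integrable_on {0..1}"
    by (intro integrable_continuous_interval continuous_on_norm cD)
  have in2: "(\<lambda>t. norm (vector_derivative \<gamma> (at t))) integrable_on {0..1}"
    by (rule integrable_eq[OF inD]) (simp add: vd)
  show ?thesis
    unfolding i[symmetric]
    by (rule integral_norm_bound_integral[OF iD in2]) (simp add: vd)
qed

locale obasis =
  fixes M B :: "(real^'n) set"
  assumes BM: "B \<subseteq> M" and orth: "pairwise orthogonal B" and unit: "\<And>b. b \<in> B \<Longrightarrow> norm b = 1"
    and finB: "finite B" and spanB: "span B = M"
begin

definition P :: "real^'n \<Rightarrow> real^'n" where
  "P v = (\<Sum>b\<in>B. (b \<bullet> v) *\<^sub>R b)"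

lemma inner_B: "b \<in> B \<Longrightarrow> c \<in> B \<Longrightarrow> b \<bullet> c = (if b = c then 1 else 0)"
  using orth unit[of b] by (auto simp: pairwise_def orthogonal_def norm_eq_1)

lemma P_inner_B: "c \<in> B \<Longrightarrow> P v \<bullet> c = v \<bullet> c"
proof -
  assume c: "c \<in> B"
  have "P v \<bullet> c = (\<Sum>b\<in>B. (b \<bullet> v) * (b \<bullet> c))" by (simp add: P_def inner_sum_left)
  also have "\<dots> = (\<Sum>b\<in>B. if b = c then v \<bullet> c else 0)"
    using c by (intro sum.cong) (auto simp: inner_B inner_commute)
  also have "\<dots> = v \<bullet> c" using c finB by simp
  finally show ?thesis .
qed

lemma P_inner_M: "x \<in> M \<Longrightarrow> v \<bullet> x = P v \<bullet> x"
proof -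
  assume x: "x \<in> M"
  have "orthogonal (v - P v) x"
    by (rule orthogonal_to_span[of x B]) (use x spanB in \<open>auto simp: orthogonal_def inner_diff_left P_inner_B\<close>)
  then show ?thesis by (simp add: orthogonal_def inner_diff_left)
qed

lemma norm_P_sq: "(norm (P v))\<^sup>2 = (\<Sum>b\<in>B. (b \<bullet> v)\<^sup>2)"
proof -
  have "(norm (P v))\<^sup>2 = P v \<bullet> P v" by (simp add: power2_norm_eq_inner)
  also have "\<dots> = (\<Sum>b\<in>B. (b \<bullet> v) * (P v \<bullet> b))" by (simp add: P_def inner_sum_right)
  also have "\<dots> = (\<Sum>b\<in>B. (b \<bullet> v)\<^sup>2)"
    by (intro sum.cong refl) (simp add: P_inner_B power2_eq_square inner_commute[of v])
  finally show ?thesis .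
qed

end


context obasis begin

lemma eucl_le:
  assumes x: "x \<in> D" and v: "v \<noteq> 0"
  shows "eucl_margin (lin_clf v) D \<le> ereal (\<bar>v \<bullet> x\<bar> / norm v)"
proof -
  have nv: "norm v > 0" "v \<bullet> v > 0" using v by auto
  have vv: "v \<bullet> v = (norm v)\<^sup>2" by (simp add: power2_norm_eq_inner)
  have le1: "eucl_margin (lin_clf v) D \<le> (INF \<delta>\<in>{\<delta>. lin_clf v x \<noteq> lin_clf v (x + \<delta>)}. ereal (norm \<delta>))"
    unfolding eucl_margin_def by (rule INF_lower[OF x])
  show ?thesis
  proof (cases "v \<bullet> x \<ge> 0")
    case False
    define \<delta> where "\<delta> = (- (v \<bullet> x) / (v \<bullet> v)) *\<^sub>R v"
    have "v \<bullet> (x + \<delta>) = 0" using nv by (simp add: \<delta>_def inner_add_right inner_diff_right)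
    then have "\<delta> \<in> {\<delta>. lin_clf v x \<noteq> lin_clf v (x + \<delta>)}" using False by (simp add: lin_clf_def)
    then have "(INF \<delta>\<in>{\<delta>. lin_clf v x \<noteq> lin_clf v (x + \<delta>)}. ereal (norm \<delta>)) \<le> ereal (norm \<delta>)"
      by (rule INF_lower)
    also have "norm \<delta> = \<bar>v \<bullet> x\<bar> / norm v"
      using nv by (simp add: \<delta>_def vv power2_eq_square)
    finally show ?thesis using le1 by simp
  next
    case True
    have "(INF \<delta>\<in>{\<delta>. lin_clf v x \<noteq> lin_clf v (x + \<delta>)}. ereal (norm \<delta>)) \<le> ereal (\<bar>v \<bullet> x\<bar> / norm v)"
    proof (rule ereal_le_epsilon2)
      fix e :: real assume e: "0 < e"
      define \<delta> where "\<delta> = (- (v \<bullet> x + e * norm v) / (v \<bullet> v)) *\<^sub>R v"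
      have "v \<bullet> (x + \<delta>) = - e * norm v" using nv by (simp add: \<delta>_def inner_add_right)
      then have "v \<bullet> (x + \<delta>) < 0" using e nv by simp
      then have "\<delta> \<in> {\<delta>. lin_clf v x \<noteq> lin_clf v (x + \<delta>)}" using True by (simp add: lin_clf_def)
      then have "(INF \<delta>\<in>{\<delta>. lin_clf v x \<noteq> lin_clf v (x + \<delta>)}. ereal (norm \<delta>)) \<le> ereal (norm \<delta>)"
        by (rule INF_lower)
      also have "norm \<delta> = \<bar>v \<bullet> x\<bar> / norm v + e"
      proof -
        have "\<bar>- (v \<bullet> x) - e * norm v\<bar> = v \<bullet> x + e * norm v"
          using True mult_pos_pos[OF e nv(1)] by (simp add: abs_if)
        then show ?thesis using nv True e by (simp add: \<delta>_def vv power2_eq_square field_simps)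
      qed
      finally show "(INF \<delta>\<in>{\<delta>. lin_clf v x \<noteq> lin_clf v (x + \<delta>)}. ereal (norm \<delta>)) \<le> ereal (\<bar>v \<bullet> x\<bar> / norm v) + ereal e"
        by simp
    qed
    then show ?thesis using le1 by simp
  qed
qed

lemma geo_ge:
  assumes x1: "x1 \<in> M" and x2: "x2 \<in> M" and a: "norm (P v) > 0"
  shows "ereal (\<bar>v \<bullet> x1 - v \<bullet> x2\<bar> / norm (P v)) \<le> geodesic_dist M x1 x2"
  unfolding geodesic_dist_def
proof (rule Inf_greatest, clarify)
  fix \<gamma> :: "real \<Rightarrow> real^'n"
  assume g: "\<gamma> C1_differentiable_on {0..1}" "\<gamma> ` {0..1} \<subseteq> M" "x1 = \<gamma> 0" "x2 = \<gamma> 1"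
  have "\<bar>v \<bullet> x1 - v \<bullet> x2\<bar> = \<bar>P v \<bullet> (\<gamma> 1 - \<gamma> 0)\<bar>"
    using P_inner_M[OF x1] P_inner_M[OF x2] g by (simp add: inner_diff_right)
  also have "\<dots> \<le> norm (P v) * norm (\<gamma> 1 - \<gamma> 0)" by (rule Cauchy_Schwarz_ineq2)
  also have "\<dots> \<le> norm (P v) * integral {0..1} (\<lambda>t. norm (vector_derivative \<gamma> (at t)))"
    by (intro mult_left_mono C1_chord_le g) simp
  finally show "ereal (\<bar>v \<bullet> \<gamma> 0 - v \<bullet> \<gamma> 1\<bar> / norm (P v)) \<le> ereal (integral {0..1} (\<lambda>t. norm (vector_derivative \<gamma> (at t))))"
    using a g by (simp add: divide_le_eq mult.commute)
qed

end


context obasis begin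

lemma ratio_le:
  assumes DM: "D \<subseteq> M" and Dne: "D \<noteq> {}"
  shows "margin_ratio M (lin_clf v) D \<le> norm (P v) / norm v"
proof (cases "manifold_margin M (lin_clf v) D = \<infinity>")
  case True
  then show ?thesis by (simp add: margin_ratio_def)
next
  case False
  define a where "a = norm (P v)"
  have a: "a > 0"
  proof (rule ccontr)
    assume "\<not> a > 0"
    then have "P v = 0" by (simp add: a_def)
    then have "\<And>x. x \<in> D \<Longrightarrow> lin_clf v x = 1"
      using DM P_inner_M by (auto simp: lin_clf_def)
    then have "{geodesic_dist M x1 x2 | x1 x2. x1 \<in> D \<and> x2 \<in> D \<and> lin_clf v x1 \<noteq> lin_clf v x2} = {}"
      by auto
    then have "manifold_margin M (lin_clf v) D = \<infinity>"
      unfolding manifold_margin_def by (simp only: Inf_empty) (simp add: top_ereal_def)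
    with False show False by simp
  qed
  have v: "v \<noteq> 0"
  proof
    assume "v = 0"
    then have "P v = 0" by (simp add: P_def)
    with a show False by (simp add: a_def)
  qed
  have nv: "norm v > 0" using v by simp
  define m where "m = Inf ((\<lambda>x. \<bar>v \<bullet> x\<bar>) ` D)"
  have bdd: "bdd_below ((\<lambda>x. \<bar>v \<bullet> x\<bar>) ` D)" by (rule bdd_belowI[of _ 0]) auto
  have m_le: "m \<le> \<bar>v \<bullet> x\<bar>" if "x \<in> D" for x
    unfolding m_def using bdd that by (intro cInf_lower) auto
  have m0: "0 \<le> m"
    unfolding m_def using Dne by (intro cInf_greatest) auto
  have dM_ge: "ereal (m / a) \<le> manifold_margin M (lin_clf v) D"
  proof -
    have "ereal (2 * m / a) \<le> Inf {geodesic_dist M x1 x2 | x1 x2. x1 \<in> D \<and> x2 \<in> D \<and> lin_clf v x1 \<noteq> lin_clf v x2}"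
    proof (rule Inf_greatest, clarify)
      fix x1 x2 assume x: "x1 \<in> D" "x2 \<in> D" "lin_clf v x1 \<noteq> lin_clf v x2"
      have "\<bar>v \<bullet> x1 - v \<bullet> x2\<bar> = \<bar>v \<bullet> x1\<bar> + \<bar>v \<bullet> x2\<bar>"
        using x(3) by (auto simp: lin_clf_def split: if_splits)
      also have "\<dots> \<ge> 2 * m" using m_le[OF x(1)] m_le[OF x(2)] by simp
      finally have "2 * m / a \<le> \<bar>v \<bullet> x1 - v \<bullet> x2\<bar> / a" using a by (simp add: divide_right_mono)
      then have "ereal (2 * m / a) \<le> ereal (\<bar>v \<bullet> x1 - v \<bullet> x2\<bar> / a)" by simp
      also have "\<dots> \<le> geodesic_dist M x1 x2"
        unfolding a_def using x DM a by (intro geo_ge) (auto simp: a_def)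
      finally show "ereal (2 * m / a) \<le> geodesic_dist M x1 x2" .
    qed
    then have "ereal (1/2) * ereal (2 * m / a) \<le> manifold_margin M (lin_clf v) D"
      unfolding manifold_margin_def by (rule ereal_mult_left_mono) simp
    then show ?thesis by simp
  qed
  obtain y where y: "manifold_margin M (lin_clf v) D = ereal y"
    using False dM_ge by (cases "manifold_margin M (lin_clf v) D") auto
  have ym: "m / a \<le> y" using dM_ge y by simp
  have dE0: "0 \<le> eucl_margin (lin_clf v) D"
    unfolding eucl_margin_def by (intro INF_greatest) auto
  obtain x0 where x0: "x0 \<in> D" using Dne by auto
  obtain t where t: "eucl_margin (lin_clf v) D = ereal t"
    using dE0 eucl_le[OF x0 v] by (cases "eucl_margin (lin_clf v) D") auto
  have t0: "0 \<le> t" using dE0 t by simp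
  have "t * norm v \<le> m"
    unfolding m_def
  proof (rule cInf_greatest)
    show "(\<lambda>x. \<bar>v \<bullet> x\<bar>) ` D \<noteq> {}" using Dne by simp
    fix z assume "z \<in> (\<lambda>x. \<bar>v \<bullet> x\<bar>) ` D"
    then obtain x where x: "x \<in> D" "z = \<bar>v \<bullet> x\<bar>" by auto
    have "t \<le> \<bar>v \<bullet> x\<bar> / norm v" using eucl_le[OF x(1) v] t by simp
    then show "t * norm v \<le> z" using nv x(2) by (simp add: le_divide_eq)
  qed
  then have tm: "t \<le> m / norm v" using nv by (simp add: le_divide_eq)
  have ratio: "margin_ratio M (lin_clf v) D = t / y"
    using False y t by (simp add: margin_ratio_def)
  show ?thesis
  proof (cases "m = 0")
    case True
    then have "t = 0" using tm t0 by simp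
    then show ?thesis using ratio a nv by (simp add: a_def)
  next
    case False
    then have mpos: "m > 0" using m0 by simp
    have "t / y \<le> t / (m / a)"
    proof -
      have "0 < m / a" using mpos a by simp
      moreover have "0 < y * (m / a)" using \<open>0 < m / a\<close> ym by (intro mult_pos_pos) auto
      ultimately show ?thesis using ym t0 by (intro divide_left_mono) auto
    qed
    also have "\<dots> \<le> (m / norm v) / (m / a)"
      using mpos a tm by (intro divide_right_mono) auto
    also have "\<dots> = a / norm v" using mpos a nv by (simp add: field_simps)
    finally show ?thesis using ratio by (simp add: a_def)
  qed
qed

end


theorem proposition1:
  fixes M D :: "(real^'n) set" and r :: nat
  assumes "subspace M" and "dim M = r" and "1 \<le> r"
    and "D \<subseteq> M" and "D \<noteq> {}"
    and "AE nv in gauss_vec. manifold_margin M (lin_clf nv) D > 0"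
  shows "(\<integral>\<^sup>+ nv. ennreal (margin_ratio M (lin_clf nv) D) \<partial>gauss_vec)
           \<le> ennreal (sqrt (real r / real CARD('n)))"
proof -
  obtain B where B: "B \<subseteq> M" "pairwise orthogonal B" "\<And>x. x \<in> B \<Longrightarrow> norm x = 1"
    "independent B" "card B = dim M" "span B = M"
    using orthonormal_basis_subspace[OF assms(1)] by metis
  have finB: "finite B" using B(4) by (rule independent_imp_finite)
  interpret obasis M B using B finB by unfold_locales auto
  have pt: "margin_ratio M (lin_clf v) D \<le> sqrt (\<Sum>b\<in>B. (b \<bullet> v)\<^sup>2 / (v \<bullet> v))" for v
  proof -
    have "norm (P v) / norm v = sqrt ((norm (P v))\<^sup>2) / sqrt (v \<bullet> v)"
      by (simp add: norm_eq_sqrt_inner[of v])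
    also have "\<dots> = sqrt (\<Sum>b\<in>B. (b \<bullet> v)\<^sup>2 / (v \<bullet> v))"
      by (simp add: norm_P_sq real_sqrt_divide[symmetric] sum_divide_distrib[symmetric])
    finally show ?thesis using ratio_le[OF assms(4,5), of v] by simp
  qed
  have "(\<integral>\<^sup>+ nv. ennreal (margin_ratio M (lin_clf nv) D) \<partial>gauss_vec)
      \<le> (\<integral>\<^sup>+ v. ennreal (sqrt (\<Sum>b\<in>B. (b \<bullet> v)\<^sup>2 / (v \<bullet> v))) \<partial>(gauss_vec :: (real^'n) measure))"
    by (intro nn_integral_mono ennreal_leI pt)
  also have "\<dots> \<le> ennreal (sqrt (real r / real CARD('n)))"
    using finB B(3) B(5) assms(2,3) by (intro main_prob) auto
  finally show ?thesis .
qed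

end
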